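(* Let $G$ be a connected bipartite simple graph with $m$ edges. Then \[ \mathscr{K}_e(G)\ge 2m-\frac32, \] with equality if and only if $G$ is complete bipartite.
   Context: Kemeny's constant of an irreducible finite Markov chain with transition matrix $P$ whose eigenvalues (with multiplicity) are $1=\rho_1,\rho_2,\dots,\rho_N$ (with $1$ simple) is $\mathscr{K}(P)=\sum_{i=2}^{N}\frac{1}{1-\rho_i}$. $\mathscr{K}_e(G)$ is Kemeny's constant of the simple random walk on the arcs of $G$ (ordered pairs $(u,v)$ with $\{u,v\}$ an edge), where from $(u,v)$ one moves to $(v,w)$ with probability $1/\deg(v)$ for each neighbor $w$ of $v$. *)

theory Defs
  imports "HOL-Computational_Algebra.Computational_Algebra" "HOL-Combinatorics.Permutations"
begin

definition char_poly_on :: "'s set \<Rightarrow> ('s \<Rightarrow> 's \<Rightarrow> real) \<Rightarrow> complex poly" where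
  "char_poly_on S P =
     (\<Sum>\<sigma> | \<sigma> permutes S. of_int (sign \<sigma>) *
        (\<Prod>i\<in>S. (if \<sigma> i = i then [:0, 1:] else 0) - [:complex_of_real (P i (\<sigma> i)):]))"

definition eigenvalues_on :: "'s set \<Rightarrow> ('s \<Rightarrow> 's \<Rightarrow> real) \<Rightarrow> complex multiset" where
  "eigenvalues_on S P = proots (char_poly_on S P)"

text \<open>Kemeny's constant: sum of 1/(1-rho) over all eigenvalues except one copy of 1.
  (For a real stochastic matrix this sum is real; we take its real part.)\<close>
definition kemeny :: "'s set \<Rightarrow> ('s \<Rightarrow> 's \<Rightarrow> real) \<Rightarrow> real" where
  "kemeny S P = Re (\<Sum>\<rho>\<in># (eigenvalues_on S P - {#1#}). 1 / (1 - \<rho>))"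

definition simple_graph :: "'a set \<Rightarrow> ('a \<Rightarrow> 'a \<Rightarrow> bool) \<Rightarrow> bool" where
  "simple_graph V E \<longleftrightarrow> finite V \<and> (\<forall>u v. E u v \<longrightarrow> u \<in> V \<and> v \<in> V) \<and>
     (\<forall>u v. E u v \<longrightarrow> E v u) \<and> (\<forall>u. \<not> E u u)"

definition connected_graph :: "'a set \<Rightarrow> ('a \<Rightarrow> 'a \<Rightarrow> bool) \<Rightarrow> bool" where
  "connected_graph V E \<longleftrightarrow> V \<noteq> {} \<and> (\<forall>u\<in>V. \<forall>v\<in>V. E\<^sup>*\<^sup>* u v)"

definition bipartite :: "'a set \<Rightarrow> ('a \<Rightarrow> 'a \<Rightarrow> bool) \<Rightarrow> bool" where
  "bipartite V E \<longleftrightarrow> (\<exists>A B. A \<union> B = V \<and> A \<inter> B = {} \<and>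
     (\<forall>u v. E u v \<longrightarrow> (u \<in> A \<and> v \<in> B) \<or> (u \<in> B \<and> v \<in> A)))"

definition complete_bipartite :: "'a set \<Rightarrow> ('a \<Rightarrow> 'a \<Rightarrow> bool) \<Rightarrow> bool" where
  "complete_bipartite V E \<longleftrightarrow> (\<exists>A B. A \<union> B = V \<and> A \<inter> B = {} \<and> A \<noteq> {} \<and> B \<noteq> {} \<and>
     (\<forall>u\<in>V. \<forall>v\<in>V. E u v \<longleftrightarrow> (u \<in> A \<and> v \<in> B) \<or> (u \<in> B \<and> v \<in> A)))"

definition edges :: "('a \<Rightarrow> 'a \<Rightarrow> bool) \<Rightarrow> 'a set set" where
  "edges E = {{u, v} | u v. E u v}"

definition degree :: "'a set \<Rightarrow> ('a \<Rightarrow> 'a \<Rightarrow> bool) \<Rightarrow> 'a \<Rightarrow> nat" where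
  "degree V E v = card {w \<in> V. E v w}"

definition arcs :: "('a \<Rightarrow> 'a \<Rightarrow> bool) \<Rightarrow> ('a \<times> 'a) set" where
  "arcs E = {(u, v). E u v}"

definition arc_walk :: "'a set \<Rightarrow> ('a \<Rightarrow> 'a \<Rightarrow> bool) \<Rightarrow> ('a \<times> 'a) \<Rightarrow> ('a \<times> 'a) \<Rightarrow> real" where
  "arc_walk V E a b = (if snd a = fst b \<and> E (fst b) (snd b) then 1 / real (degree V E (snd a)) else 0)"

definition kemeny_edge :: "'a set \<Rightarrow> ('a \<Rightarrow> 'a \<Rightarrow> bool) \<Rightarrow> real" where
  "kemeny_edge V E = kemeny (arcs E) (arc_walk V E)"

end

theory Submission
  imports Defs "Jordan_Normal_Form.Schur_Decomposition"
begin

locale sg =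
  fixes V :: "'a set" and E :: "'a \<Rightarrow> 'a \<Rightarrow> bool"
  assumes simple: "simple_graph V E" and conn: "connected_graph V E" and ne: "edges E \<noteq> {}"
begin

definition "N x = {y\<in>V. E x y}"

lemma finV: "finite V" using simple by (simp add: simple_graph_def)
lemma EV: "E u v \<Longrightarrow> u \<in> V \<and> v \<in> V" using simple by (simp add: simple_graph_def)
lemma Esym: "E u v \<Longrightarrow> E v u" using simple by (simp add: simple_graph_def)
lemma Eirr: "\<not> E u u" using simple by (simp add: simple_graph_def)
lemma finN: "finite (N x)" using finV by (simp add: N_def)
lemma d_N: "degree V E x = card (N x)" by (simp add: degree_def N_def)
lemma Ar_Sigma: "arcs E = Sigma V N" by (auto simp: arcs_def N_def dest: EV)
lemma finAr: "finite (arcs E)" using Ar_Sigma finV finN by simp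
lemma sum_Ar: "(\<Sum>a\<in>arcs E. F a) = (\<Sum>x\<in>V. \<Sum>y\<in>N x. F (x,y))"
  using Ar_Sigma finV finN by (simp add: sum.Sigma)
lemma swap_Ar: "(\<Sum>a\<in>arcs E. F (fst a) (snd a)) = (\<Sum>a\<in>arcs E. F (snd a) (fst a))"
  by (rule sum.reindex_bij_witness[of _ prod.swap prod.swap]) (auto simp: arcs_def intro: Esym)

lemma N_ne: assumes "x \<in> V" shows "N x \<noteq> {}"
proof -
  from ne obtain u v where uv: "E u v" by (auto simp: edges_def)
  with EV have "u \<in> V" by blast
  with conn assms have "E\<^sup>*\<^sup>* x u" by (auto simp: connected_graph_def)
  then show ?thesis
  proof (cases rule: converse_rtranclpE)
    case base then show ?thesis using uv EV by (auto simp: N_def)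
  next
    case (step z) then show ?thesis using EV by (auto simp: N_def)
  qed
qed

lemma deg_pos: "x \<in> V \<Longrightarrow> degree V E x > 0"
  using N_ne finN by (simp add: d_N card_gt_0_iff)

lemma P_eq: "b \<in> arcs E \<Longrightarrow> arc_walk V E a b = (if snd a = fst b then 1 / real (degree V E (snd a)) else 0)"
  by (auto simp: arc_walk_def arcs_def)

lemma P_mult_sum:
  fixes G :: "'a \<times> 'a \<Rightarrow> 'b::real_normed_field"
  assumes a: "a \<in> arcs E"
  shows "(\<Sum>b\<in>arcs E. of_real (arc_walk V E a b) * G b) = (\<Sum>y\<in>N (snd a). G (snd a, y)) / of_nat (degree V E (snd a))"
proof -
  have sa: "snd a \<in> V" using a EV by (auto simp: arcs_def)
  have "(\<Sum>b\<in>arcs E. of_real (arc_walk V E a b) * G b) = (\<Sum>x\<in>V. \<Sum>y\<in>N x. of_real (arc_walk V E a (x,y)) * G (x,y))"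
    by (rule sum_Ar)
  also have "\<dots> = (\<Sum>x\<in>V. if x = snd a then (\<Sum>y\<in>N x. G (x,y)) / of_nat (degree V E x) else 0)"
  proof (rule sum.cong[OF refl])
    fix x assume x: "x \<in> V"
    have "\<And>y. y \<in> N x \<Longrightarrow> arc_walk V E a (x,y) = (if snd a = x then 1 / real (degree V E (snd a)) else 0)"
      by (subst P_eq) (auto simp: arcs_def N_def)
    then show "(\<Sum>y\<in>N x. of_real (arc_walk V E a (x,y)) * G (x,y)) = (if x = snd a then (\<Sum>y\<in>N x. G (x,y)) / of_nat (degree V E x) else 0)"
    proof (cases "x = snd a")
      case True
      then have "(\<Sum>y\<in>N x. of_real (arc_walk V E a (x,y)) * G (x,y)) = (\<Sum>y\<in>N x. G (x,y) / of_nat (degree V E x))"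
        using \<open>\<And>y. y \<in> N x \<Longrightarrow> _\<close> by (intro sum.cong[OF refl]) (simp add: of_real_divide)
      then show ?thesis using True by (simp add: sum_divide_distrib)
    next
      case False
      have z: "arc_walk V E a (x,y) = 0" if "y \<in> N x" for y
      proof -
        have "(x,y) \<in> arcs E" using that by (simp add: N_def arcs_def)
        then have "arc_walk V E a (x,y) = (if snd a = x then 1 / real (degree V E (snd a)) else 0)" by (simp add: P_eq)
        then show ?thesis using False by (cases "snd a = x") auto
      qed
      have "(\<Sum>y\<in>N x. of_real (arc_walk V E a (x,y)) * G (x,y)) = 0"
        by (rule sum.neutral) (simp add: z)
      then show ?thesis using False by simp
    qed
  qed
  also have "\<dots> = (\<Sum>y\<in>N (snd a). G (snd a, y)) / of_nat (degree V E (snd a))"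
    using sa finV by (simp add: sum.delta')
  finally show ?thesis .
qed

lemma row_sum: assumes "a \<in> arcs E" shows "(\<Sum>b\<in>arcs E. arc_walk V E a b) = 1"
proof -
  have sa: "snd a \<in> V" using assms EV by (auto simp: arcs_def)
  from P_mult_sum[OF assms, of "\<lambda>_. 1::real"] show ?thesis
    using deg_pos[OF sa] by (simp add: d_N)
qed

lemma col_sum: assumes b: "b \<in> arcs E" shows "(\<Sum>a\<in>arcs E. arc_walk V E a b) = 1"
proof -
  have fb: "fst b \<in> V" using b EV by (auto simp: arcs_def)
  have "(\<Sum>a\<in>arcs E. arc_walk V E a b) = (\<Sum>x\<in>V. \<Sum>y\<in>N x. arc_walk V E (x,y) b)"
    by (rule sum_Ar)
  also have "\<dots> = (\<Sum>x\<in>V. if E x (fst b) then 1 / real (degree V E (fst b)) else 0)"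
  proof (rule sum.cong[OF refl])
    fix x assume x: "x \<in> V"
    have "(\<Sum>y\<in>N x. arc_walk V E (x,y) b) = (\<Sum>y\<in>N x. if y = fst b then 1 / real (degree V E (fst b)) else 0)"
      using b by (intro sum.cong[OF refl]) (auto simp: P_eq)
    also have "\<dots> = (if E x (fst b) then 1 / real (degree V E (fst b)) else 0)"
      using finN fb by (simp add: sum.delta' N_def)
    finally show "(\<Sum>y\<in>N x. arc_walk V E (x,y) b) = (if E x (fst b) then 1 / real (degree V E (fst b)) else 0)" .
  qed
 also have "\<dots> = real (card (V \<inter> {x. E x (fst b)})) / real (degree V E (fst b))"
    using finV by (simp add: sum.If_cases)
  also have "V \<inter> {x. E x (fst b)} = N (fst b)" by (auto simp: N_def intro: Esym)
  finally show ?thesis using deg_pos[OF fb] by (simp add: d_N)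
qed

lemma col_sum_gen:
  fixes G :: "'a \<times> 'a \<Rightarrow> 'b::real_normed_field"
  shows "(\<Sum>a\<in>arcs E. \<Sum>b\<in>arcs E. of_real (arc_walk V E a b) * G b) = (\<Sum>b\<in>arcs E. G b)"
proof -
  have "(\<Sum>a\<in>arcs E. \<Sum>b\<in>arcs E. of_real (arc_walk V E a b) * G b) = (\<Sum>b\<in>arcs E. (\<Sum>a\<in>arcs E. of_real (arc_walk V E a b)) * G b)"
    by (subst sum.swap) (simp add: sum_distrib_right)
  also have "\<dots> = (\<Sum>b\<in>arcs E. G b)"
    by (intro sum.cong[OF refl]) (simp add: col_sum flip: of_real_sum)
  finally show ?thesis .
qed

lemma harmonic_const:
  fixes h :: "'a \<Rightarrow> real"
  assumes H: "\<forall>x\<in>V. of_nat (degree V E x) * h x = (\<Sum>y\<in>N x. h y)"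
  shows "\<forall>x\<in>V. \<forall>y\<in>V. h x = h y"
proof -
  have Vne: "V \<noteq> {}" using conn by (simp add: connected_graph_def)
  define M where "M = Max (h ` V)"
  have le: "\<And>x. x \<in> V \<Longrightarrow> h x \<le> M" unfolding M_def using finV by simp
  have "M \<in> h ` V" unfolding M_def using finV Vne by simp
  then obtain x0 where x0: "x0 \<in> V" "h x0 = M" by auto
  have "h v = M" if "E\<^sup>*\<^sup>* x0 v" for v
    using that
  proof (induction rule: rtranclp_induct)
    case base then show ?case using x0 by simp
  next
    case (step y z)
    have yV: "y \<in> V" using EV[OF step.hyps(2)] by blast
    have "(\<Sum>w\<in>N y. M - h w) = of_nat (card (N y)) * M - (\<Sum>w\<in>N y. h w)"
      by (simp add: sum_subtractf)
    also have "\<dots> = 0"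
    proof -
      have e: "real (card (N y)) * h y = (\<Sum>w\<in>N y. h w)" using bspec[OF H yV] unfolding d_N .
      show ?thesis unfolding step.IH[symmetric] e[symmetric] by simp
    qed
    finally have s0: "(\<Sum>w\<in>N y. M - h w) = 0" .
    have nn: "\<forall>w\<in>N y. 0 \<le> M - h w" using le by (simp add: N_def)
    have all0: "\<forall>w\<in>N y. M - h w = 0"
      using sum_nonneg_eq_0_iff[OF finN[of y], of "\<lambda>w. M - h w"] nn s0 by simp
    have "z \<in> N y" using EV[OF step.hyps(2)] step.hyps(2) by (simp add: N_def)
    then show ?case using all0 by simp
  qed
  moreover have "E\<^sup>*\<^sup>* x0 v" if "v \<in> V" for v using conn x0(1) that unfolding connected_graph_def by blast
  ultimately have "\<forall>v\<in>V. h v = M" by blast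
  then show ?thesis by simp
qed

lemma eig_h:
  fixes F :: "'a \<times> 'a \<Rightarrow> complex"
  assumes eig: "\<forall>a\<in>arcs E. (\<Sum>b\<in>arcs E. of_real (arc_walk V E a b) * F b) = \<rho> * F a"
    and r: "\<rho> \<noteq> 0"
  defines "h \<equiv> \<lambda>x. (\<Sum>y\<in>N x. F (x,y)) / (of_nat (degree V E x) * \<rho>)"
  shows "\<forall>a\<in>arcs E. F a = h (snd a)"
    and "\<forall>x\<in>V. \<rho> * of_nat (degree V E x) * h x = (\<Sum>y\<in>N x. h y)"
proof -
  show A: "\<forall>a\<in>arcs E. F a = h (snd a)"
  proof
    fix a assume a: "a \<in> arcs E"
    have sa: "snd a \<in> V" using a EV by (auto simp: arcs_def)
    from eig a P_mult_sum[OF a, of F] have "\<rho> * F a = (\<Sum>y\<in>N (snd a). F (snd a, y)) / of_nat (degree V E (snd a))"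
      by simp
    then show "F a = h (snd a)" using r deg_pos[OF sa] unfolding h_def
      by (simp add: field_simps)
  qed
  show "\<forall>x\<in>V. \<rho> * of_nat (degree V E x) * h x = (\<Sum>y\<in>N x. h y)"
  proof
    fix x assume x: "x \<in> V"
    have "\<rho> * of_nat (degree V E x) * h x = (\<Sum>y\<in>N x. F (x,y))"
      using r deg_pos[OF x] unfolding h_def by (simp add: field_simps)
    also have "\<dots> = (\<Sum>y\<in>N x. h y)"
      using A by (intro sum.cong[OF refl]) (auto simp: N_def arcs_def)
    finally show "\<rho> * of_nat (degree V E x) * h x = (\<Sum>y\<in>N x. h y)" .
  qed
qed

end

context sg
begin

lemma eig_real:
  fixes F :: "'a \<times> 'a \<Rightarrow> complex"
  assumes eig: "\<forall>a\<in>arcs E. (\<Sum>b\<in>arcs E. of_real (arc_walk V E a b) * F b) = \<rho> * F a"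
    and r: "\<rho> \<noteq> 0" and a0: "a0 \<in> arcs E" and Fa0: "F a0 \<noteq> 0"
  shows "Im \<rho> = 0 \<and> cmod \<rho> \<le> 1"
proof -
  define h where "h = (\<lambda>x. (\<Sum>y\<in>N x. F (x,y)) / (of_nat (degree V E x) * \<rho>))"
  have hF: "\<forall>a\<in>arcs E. F a = h (snd a)"
    unfolding h_def by (rule eig_h(1)[OF eig r])
  have hh: "\<forall>x\<in>V. \<rho> * of_nat (degree V E x) * h x = (\<Sum>y\<in>N x. h y)"
    unfolding h_def by (rule eig_h(2)[OF eig r])
  have hw: "h (snd a0) \<noteq> 0" using hF a0 Fa0 by auto
  define D where "D = (\<Sum>a\<in>arcs E. (cmod (h (fst a)))^2)"
  have D2: "D = (\<Sum>a\<in>arcs E. (cmod (h (snd a)))^2)"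
    unfolding D_def by (rule swap_Ar)
  have "(cmod (h (snd a0)))^2 \<le> D" unfolding D2
    by (rule member_le_sum[OF a0 _ finAr]) simp
  moreover have "(cmod (h (snd a0)))^2 > 0" using hw by simp
  ultimately have Dpos: "D > 0" by linarith
  define Q where "Q = (\<Sum>a\<in>arcs E. cnj (h (fst a)) * h (snd a))"
  have "Q = (\<Sum>x\<in>V. \<Sum>y\<in>N x. cnj (h x) * h y)" unfolding Q_def by (subst sum_Ar) simp
  also have "\<dots> = (\<Sum>x\<in>V. cnj (h x) * (\<rho> * of_nat (degree V E x) * h x))"
    using hh by (simp add: sum_distrib_left)
  also have "\<dots> = \<rho> * (\<Sum>x\<in>V. of_nat (card (N x)) * (cnj (h x) * h x))"
    unfolding sum_distrib_left by (intro sum.cong[OF refl]) (simp add: d_N mult_ac)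
  also have "(\<Sum>x\<in>V. of_nat (card (N x)) * (cnj (h x) * h x)) = (\<Sum>x\<in>V. \<Sum>y\<in>N x. cnj (h x) * h x)"
    by simp
  also have "(\<Sum>x\<in>V. \<Sum>y\<in>N x. cnj (h x) * h x) = (\<Sum>a\<in>arcs E. cnj (h (fst a)) * h (fst a))"
    by (subst sum_Ar) simp
  also have "\<dots> = of_real D" unfolding D_def of_real_sum
  proof (intro sum.cong[OF refl])
    fix a
    show "cnj (h (fst a)) * h (fst a) = complex_of_real ((cmod (h (fst a)))\<^sup>2)"
      using complex_norm_square[of "h (fst a)"] by (simp add: mult.commute)
  qed
  finally have Q1: "Q = \<rho> * of_real D" .
  have "cnj Q = (\<Sum>a\<in>arcs E. h (fst a) * cnj (h (snd a)))" unfolding Q_def by simp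
  also have "\<dots> = (\<Sum>a\<in>arcs E. h (snd a) * cnj (h (fst a)))"
    by (rule swap_Ar)
  also have "\<dots> = Q" unfolding Q_def by (simp add: mult.commute)
  finally have Q2: "cnj Q = Q" .
  from Q1 Q2 have "cnj \<rho> * of_real D = \<rho> * of_real D" by simp
  then have "cnj \<rho> = \<rho>" using Dpos by simp
  then have "Im (cnj \<rho>) = Im \<rho>" by simp
  then have im: "Im \<rho> = 0" by simp
  have "cmod Q \<le> (\<Sum>a\<in>arcs E. cmod (cnj (h (fst a)) * h (snd a)))"
    unfolding Q_def by (rule norm_sum)
  also have "\<dots> = (\<Sum>a\<in>arcs E. cmod (h (fst a)) * cmod (h (snd a)))"
    by (simp add: norm_mult)
  also have "\<dots> \<le> (\<Sum>a\<in>arcs E. ((cmod (h (fst a)))^2 + (cmod (h (snd a)))^2) / 2)"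
  proof (rule sum_mono)
    fix a
    show "cmod (h (fst a)) * cmod (h (snd a)) \<le> ((cmod (h (fst a)))^2 + (cmod (h (snd a)))^2) / 2"
      using sum_squares_bound[of "cmod (h (fst a))" "cmod (h (snd a))"] by simp
  qed
  also have "\<dots> = ((\<Sum>a\<in>arcs E. (cmod (h (fst a)))^2) + (\<Sum>a\<in>arcs E. (cmod (h (snd a)))^2)) / 2"
    by (simp add: sum.distrib flip: sum_divide_distrib)
  also have "\<dots> = (D + D) / 2" using D_def D2 by simp
  finally have "cmod Q \<le> D" by simp
  then have "cmod \<rho> * D \<le> D" using Q1 Dpos by (simp add: norm_mult)
  then have "cmod \<rho> \<le> 1" using Dpos by simp
  with im show ?thesis by simp
qed

lemma harmonic_arcs:
  fixes F :: "'a \<times> 'a \<Rightarrow> complex"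
  assumes eig: "\<forall>a\<in>arcs E. (\<Sum>b\<in>arcs E. of_real (arc_walk V E a b) * F b) = F a"
  shows "\<forall>a\<in>arcs E. \<forall>b\<in>arcs E. F a = F b"
proof -
  define h where "h = (\<lambda>x. (\<Sum>y\<in>N x. F (x,y)) / (of_nat (degree V E x) * 1))"
  have eig': "\<forall>a\<in>arcs E. (\<Sum>b\<in>arcs E. of_real (arc_walk V E a b) * F b) = 1 * F a" using eig by simp
  have hF: "\<forall>a\<in>arcs E. F a = h (snd a)"
    unfolding h_def by (rule eig_h(1)[OF eig'], simp)
  have hh: "\<forall>x\<in>V. 1 * of_nat (degree V E x) * h x = (\<Sum>y\<in>N x. h y)"
    unfolding h_def by (rule eig_h(2)[OF eig'], simp)
  have re: "\<forall>x\<in>V. of_nat (degree V E x) * Re (h x) = (\<Sum>y\<in>N x. Re (h y))"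
  proof
    fix x assume "x \<in> V"
    then have "Re (of_nat (degree V E x) * h x) = Re (\<Sum>y\<in>N x. h y)" using hh by simp
    then show "of_nat (degree V E x) * Re (h x) = (\<Sum>y\<in>N x. Re (h y))" by simp
  qed
  have im: "\<forall>x\<in>V. of_nat (degree V E x) * Im (h x) = (\<Sum>y\<in>N x. Im (h y))"
  proof
    fix x assume "x \<in> V"
    then have "Im (of_nat (degree V E x) * h x) = Im (\<Sum>y\<in>N x. h y)" using hh by simp
    then show "of_nat (degree V E x) * Im (h x) = (\<Sum>y\<in>N x. Im (h y))" by simp
  qed
  have hc: "h x = h y" if "x \<in> V" "y \<in> V" for x y
  proof (rule complex_eqI)
    show "Re (h x) = Re (h y)" using harmonic_const[OF re] that by blast
    show "Im (h x) = Im (h y)" using harmonic_const[OF im] that by blast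
  qed
  have sV: "snd a \<in> V" if "a \<in> arcs E" for a using that EV by (auto simp: arcs_def)
  show ?thesis
  proof (intro ballI)
    fix a b assume "a \<in> arcs E" "b \<in> arcs E"
    then show "F a = F b" using hF sV hc by simp
  qed
qed

end

lemma sq_expand:
  fixes x y m :: real
  assumes "x > 0" "y > 0" "m > 0" "\<alpha> = 0 \<or> \<alpha> = 1"
  shows "(\<alpha> - x*y/m)^2/(x*y) = \<alpha>/(x*y) - 2*\<alpha>/m + x*y/m^2"
  using assms by (auto simp: field_simps power2_eq_square)

context sg
begin

lemma T_bip:
  assumes AV: "A \<union> B = V" and AB: "A \<inter> B = {}"
    and bip: "\<forall>u v. E u v \<longrightarrow> (u \<in> A \<and> v \<in> B) \<or> (u \<in> B \<and> v \<in> A)"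
  defines "T \<equiv> (\<Sum>a\<in>arcs E. 1 / (real (degree V E (fst a)) * real (degree V E (snd a))))"
  shows "T \<ge> 2" and "T = 2 \<longleftrightarrow> (\<forall>u\<in>A. \<forall>v\<in>B. E u v)"
proof -
  define dd where "dd = (\<lambda>x. real (degree V E x))"
  define a where "a = (\<lambda>u v. if E u v then 1 else (0::real))"
  have finA: "finite A" and finB: "finite B" using AV finV by (auto intro: finite_subset)
  have dpos: "dd x > 0" if "x \<in> V" for x using deg_pos[OF that] by (simp add: dd_def)
  have dA: "dd x > 0" if "x \<in> A" for x using dpos that AV by blast
  have dB: "dd x > 0" if "x \<in> B" for x using dpos that AV by blast
  have asym: "a u v = a v u" for u v by (auto simp: a_def intro: Esym)
  have NA: "(\<Sum>y\<in>N x. g y) = (\<Sum>y\<in>B. a x y * g y)" if x: "x \<in> A" for x and g :: "'a \<Rightarrow> real"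
  proof -
    have "N x = {y\<in>B. E x y}" using x AB bip EV AV by (auto simp: N_def)
    then show ?thesis using finB by (simp add: sum.inter_filter, intro sum.cong) (auto simp: a_def)
  qed
  have NB: "(\<Sum>y\<in>N x. g y) = (\<Sum>y\<in>A. a x y * g y)" if x: "x \<in> B" for x and g :: "'a \<Rightarrow> real"
  proof -
    have "N x = {y\<in>A. E x y}" using x AB bip EV AV by (auto simp: N_def)
    then show ?thesis using finA by (simp add: sum.inter_filter, intro sum.cong) (auto simp: a_def)
  qed
  define S where "S = (\<Sum>u\<in>A. \<Sum>v\<in>B. a u v / (dd u * dd v))"
  have "T = (\<Sum>x\<in>V. \<Sum>y\<in>N x. 1 / (dd x * dd y))" unfolding T_def dd_def by (subst sum_Ar) simp
  also have "\<dots> = (\<Sum>x\<in>A. \<Sum>y\<in>N x. 1 / (dd x * dd y)) + (\<Sum>x\<in>B. \<Sum>y\<in>N x. 1 / (dd x * dd y))"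
    unfolding AV[symmetric] using finA finB AB by (rule sum.union_disjoint)
  also have "(\<Sum>x\<in>A. \<Sum>y\<in>N x. 1 / (dd x * dd y)) = S"
    unfolding S_def by (intro sum.cong[OF refl]) (simp add: NA)
  also have "(\<Sum>x\<in>B. \<Sum>y\<in>N x. 1 / (dd x * dd y)) = (\<Sum>x\<in>B. \<Sum>y\<in>A. a y x / (dd y * dd x))"
    by (intro sum.cong[OF refl]) (simp add: NB asym mult.commute)
  also have "\<dots> = S" unfolding S_def by (rule sum.swap)
  finally have TS: "T = 2 * S" by simp
  have degA: "dd u = (\<Sum>v\<in>B. a u v)" if "u \<in> A" for u
  proof -
    have "dd u = (\<Sum>y\<in>N u. 1)" by (simp add: dd_def d_N)
    also have "\<dots> = (\<Sum>v\<in>B. a u v)" using NA[OF that, of "\<lambda>_. 1"] by simp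
    finally show ?thesis .
  qed
  have degB: "dd v = (\<Sum>u\<in>A. a u v)" if "v \<in> B" for v
  proof -
    have "dd v = (\<Sum>y\<in>N v. 1)" by (simp add: dd_def d_N)
    also have "\<dots> = (\<Sum>u\<in>A. a v u)" using NB[OF that, of "\<lambda>_. 1"] by simp
    finally show ?thesis by (simp add: asym)
  qed
  define m where "m = (\<Sum>u\<in>A. dd u)"
  have mB: "m = (\<Sum>v\<in>B. dd v)"
  proof -
    have "m = (\<Sum>u\<in>A. \<Sum>v\<in>B. a u v)" unfolding m_def using degA by simp
    also have "\<dots> = (\<Sum>v\<in>B. \<Sum>u\<in>A. a u v)" by (rule sum.swap)
    also have "\<dots> = (\<Sum>v\<in>B. dd v)" using degB by simp
    finally show ?thesis .
  qed
  have Asum: "(\<Sum>u\<in>A. \<Sum>v\<in>B. a u v) = m" unfolding m_def using degA by simp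
  from ne obtain u0 v0 where uv0: "E u0 v0" by (auto simp: edges_def)
  have "\<exists>x. x \<in> A" using bip uv0 by blast
  then obtain x0 where x0: "x0 \<in> A" by blast
  have "dd x0 \<le> m" unfolding m_def
    by (rule member_le_sum[OF x0 _ finA]) (use dA in \<open>auto intro: less_imp_le\<close>)
  then have mpos: "m > 0" using dA[OF x0] by linarith
  define R where "R = (\<Sum>u\<in>A. \<Sum>v\<in>B. (a u v - dd u * dd v / m)^2 / (dd u * dd v))"
  have "R = (\<Sum>u\<in>A. \<Sum>v\<in>B. a u v / (dd u * dd v) - 2 * a u v / m + dd u * dd v / m^2)"
    unfolding R_def
    by (intro sum.cong[OF refl] sq_expand) (auto simp: a_def dA dB mpos)
  also have "\<dots> = S - 2 * (\<Sum>u\<in>A. \<Sum>v\<in>B. a u v) / m + (\<Sum>u\<in>A. \<Sum>v\<in>B. dd u * dd v) / m^2"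
    unfolding S_def by (simp add: sum.distrib sum_subtractf sum_divide_distrib sum_distrib_left)
  also have "(\<Sum>u\<in>A. \<Sum>v\<in>B. dd u * dd v) = (\<Sum>u\<in>A. dd u) * (\<Sum>v\<in>B. dd v)"
    by (simp add: sum_product)
  also have "S - 2 * (\<Sum>u\<in>A. \<Sum>v\<in>B. a u v) / m + (\<Sum>u\<in>A. dd u) * (\<Sum>v\<in>B. dd v) / m^2 = S - 1"
    using mpos by (simp add: Asum m_def[symmetric] mB[symmetric] power2_eq_square)
  finally have RS: "R = S - 1" .
  have Rnn: "R \<ge> 0" unfolding R_def using dA dB by (intro sum_nonneg) (simp add: less_imp_le)
  show "T \<ge> 2" using TS RS Rnn by simp
  show "T = 2 \<longleftrightarrow> (\<forall>u\<in>A. \<forall>v\<in>B. E u v)"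
  proof
    assume "T = 2"
    then have R0: "R = 0" using TS RS by simp
    have inner_nn: "\<forall>u\<in>A. 0 \<le> (\<Sum>v\<in>B. (a u v - dd u * dd v / m)^2 / (dd u * dd v))"
      using dA dB by (intro ballI sum_nonneg) (simp add: less_imp_le)
    have "\<forall>u\<in>A. (\<Sum>v\<in>B. (a u v - dd u * dd v / m)^2 / (dd u * dd v)) = 0"
      using sum_nonneg_eq_0_iff[OF finA, of "\<lambda>u. (\<Sum>v\<in>B. (a u v - dd u * dd v / m)^2 / (dd u * dd v))"]
        inner_nn R0 unfolding R_def by simp
    show "\<forall>u\<in>A. \<forall>v\<in>B. E u v"
    proof (intro ballI)
      fix u v assume u: "u \<in> A" and v: "v \<in> B"
      have nn: "\<forall>v\<in>B. 0 \<le> (a u v - dd u * dd v / m)^2 / (dd u * dd v)"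
        using dA[OF u] dB by (simp add: less_imp_le)
      have "(\<Sum>v\<in>B. (a u v - dd u * dd v / m)^2 / (dd u * dd v)) = 0"
        using \<open>\<forall>u\<in>A. _ = 0\<close> u by blast
      then have "\<forall>v\<in>B. (a u v - dd u * dd v / m)^2 / (dd u * dd v) = 0"
        using sum_nonneg_eq_0_iff[OF finB, of "\<lambda>v. (a u v - dd u * dd v / m)^2 / (dd u * dd v)"] nn by simp
      then have "(a u v - dd u * dd v / m)^2 / (dd u * dd v) = 0" using v by blast
      then have "a u v = dd u * dd v / m" using dA[OF u] dB[OF v] by simp
      moreover have "dd u * dd v / m > 0" using dA[OF u] dB[OF v] mpos by simp
      ultimately show "E u v" by (auto simp: a_def split: if_splits)
    qed
  next
    assume all: "\<forall>u\<in>A. \<forall>v\<in>B. E u v"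
    have dAc: "dd u = real (card B)" if "u \<in> A" for u
      using degA[OF that] all that by (simp add: a_def)
    have dBc: "dd v = real (card A)" if "v \<in> B" for v
      using degB[OF that] all that by (simp add: a_def)
    have "m = real (card A) * real (card B)" unfolding m_def using dAc by simp
    then have "R = 0" unfolding R_def using all dAc dBc dA dB
      by (intro sum.neutral ballI) (simp add: a_def)
    then show "T = 2" using TS RS by simp
  qed
qed

lemma card_arcs:
  assumes AV: "A \<union> B = V" and AB: "A \<inter> B = {}"
    and bip: "\<forall>u v. E u v \<longrightarrow> (u \<in> A \<and> v \<in> B) \<or> (u \<in> B \<and> v \<in> A)"
  shows "card (arcs E) = 2 * card (edges E)"
proof -
  define XA where "XA = {a\<in>arcs E. fst a \<in> A}"
  define XB where "XB = {a\<in>arcs E. fst a \<in> B}"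
  have split: "arcs E = XA \<union> XB" using AV by (auto simp: XA_def XB_def arcs_def dest: EV)
  have disj: "XA \<inter> XB = {}" using AB by (auto simp: XA_def XB_def)
  have fin: "finite XA" "finite XB" using finAr by (auto simp: XA_def XB_def)
  have side1: "v \<in> B" if "E u v" "u \<in> A" for u v using bip AB that by blast
  have side2: "v \<in> A" if "E u v" "u \<in> B" for u v using bip AB that by blast
  have "bij_betw prod.swap XA XB"
    by (rule bij_betw_byWitness[of _ prod.swap]) (auto simp: XA_def XB_def arcs_def intro: Esym side1 side2)
  then have cAB: "card XB = card XA" by (simp add: bij_betw_same_card)
  have "bij_betw (\<lambda>a. {fst a, snd a}) XA (edges E)"
  proof (rule bij_betw_imageI)
    show "inj_on (\<lambda>a. {fst a, snd a}) XA"
    proof (rule inj_onI)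
      fix x y assume x: "x \<in> XA" and y: "y \<in> XA" and eq: "{fst x, snd x} = {fst y, snd y}"
      have "snd x \<in> B" "snd y \<in> B" using x y by (auto simp: XA_def arcs_def intro: side1)
      moreover have "fst x \<in> A" "fst y \<in> A" using x y by (auto simp: XA_def)
      ultimately have "fst x = fst y \<and> snd x = snd y" using eq AB by (auto simp: doubleton_eq_iff)
      then show "x = y" by (simp add: prod_eq_iff)
    qed
    show "(\<lambda>a. {fst a, snd a}) ` XA = edges E"
    proof
      show "(\<lambda>a. {fst a, snd a}) ` XA \<subseteq> edges E" by (auto simp: XA_def arcs_def edges_def) blast
      show "edges E \<subseteq> (\<lambda>a. {fst a, snd a}) ` XA"
      proof
        fix e assume "e \<in> edges E"
        then obtain u v where e: "e = {u, v}" and uv: "E u v" by (auto simp: edges_def)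
        show "e \<in> (\<lambda>a. {fst a, snd a}) ` XA"
        proof (cases "u \<in> A")
          case True
          then have "(u,v) \<in> XA" using uv by (simp add: XA_def arcs_def)
          then show ?thesis using e by force
        next
          case False
          then have "v \<in> A" using bip uv by blast
          then have "(v,u) \<in> XA" using uv Esym by (simp add: XA_def arcs_def)
          moreover have "e = {fst (v,u), snd (v,u)}" using e by auto
          ultimately show ?thesis by blast
        qed
      qed
    qed
  qed
  then have "card XA = card (edges E)" by (simp add: bij_betw_same_card)
  then show ?thesis using split disj fin cAB by (simp add: card_Un_disjoint)
qed

lemma T_iff:
  assumes bp: "bipartite V E"
  defines "T \<equiv> (\<Sum>a\<in>arcs E. 1 / (real (degree V E (fst a)) * real (degree V E (snd a))))"
  shows "T \<ge> 2" and "T = 2 \<longleftrightarrow> complete_bipartite V E"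
    and "card (arcs E) = 2 * card (edges E)"
proof -
  from bp obtain A B where AV: "A \<union> B = V" and AB: "A \<inter> B = {}"
    and bip: "\<forall>u v. E u v \<longrightarrow> (u \<in> A \<and> v \<in> B) \<or> (u \<in> B \<and> v \<in> A)"
    unfolding bipartite_def by blast
  show "T \<ge> 2" unfolding T_def by (rule T_bip(1)[OF AV AB bip])
  show "card (arcs E) = 2 * card (edges E)" by (rule card_arcs[OF AV AB bip])
  show "T = 2 \<longleftrightarrow> complete_bipartite V E"
  proof
    assume "T = 2"
    then have all: "\<forall>u\<in>A. \<forall>v\<in>B. E u v" using T_bip(2)[OF AV AB bip] unfolding T_def by blast
    from ne obtain u0 v0 where uv0: "E u0 v0" by (auto simp: edges_def)
    have "A \<noteq> {}" "B \<noteq> {}" using bip uv0 by blast+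
    moreover have "\<forall>u\<in>V. \<forall>v\<in>V. E u v \<longleftrightarrow> (u \<in> A \<and> v \<in> B) \<or> (u \<in> B \<and> v \<in> A)"
      using all bip Esym by blast
    ultimately show "complete_bipartite V E" unfolding complete_bipartite_def using AV AB by blast
  next
    assume "complete_bipartite V E"
    then obtain A' B' where AV': "A' \<union> B' = V" and AB': "A' \<inter> B' = {}"
      and iff: "\<forall>u\<in>V. \<forall>v\<in>V. E u v \<longleftrightarrow> (u \<in> A' \<and> v \<in> B') \<or> (u \<in> B' \<and> v \<in> A')"
      unfolding complete_bipartite_def by blast
    have bip': "\<forall>u v. E u v \<longrightarrow> (u \<in> A' \<and> v \<in> B') \<or> (u \<in> B' \<and> v \<in> A')"
      using iff EV by blast
    have "\<forall>u\<in>A'. \<forall>v\<in>B'. E u v" using iff AV' by blast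
    then show "T = 2" using T_bip(2)[OF AV' AB' bip'] unfolding T_def by blast
  qed
qed

end

lemma char_poly_on_mat:
  fixes S :: "'s set" and P :: "'s \<Rightarrow> 's \<Rightarrow> real" and f :: "nat \<Rightarrow> 's"
  assumes bij: "bij_betw f {0..<n} S"
  shows "char_poly_on S P = char_poly (mat n n (\<lambda>(i,j). complex_of_real (P (f i) (f j))))"
proof -
  define M where "M = mat n n (\<lambda>(i,j). complex_of_real (P (f i) (f j)))"
  define g where "g = inv_into {0..<n} f"
  have gf: "g (f i) = i" if "i < n" for i
    using bij that unfolding g_def by (simp add: bij_betw_def inv_into_f_f)
  have fg: "f (g x) = x" if "x \<in> S" for x
    using bij that unfolding g_def by (metis bij_betw_imp_surj_on f_inv_into_f)
  have gS: "g x < n" if "x \<in> S" for x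
    using bij that unfolding g_def by (metis atLeastLessThan_iff bij_betw_imp_surj_on inv_into_into)
  have fS: "f i \<in> S" if "i < n" for i
    using bij that by (simp add: bij_betw_apply)
  have finS: "finite S" using bij bij_betw_finite by blast
  have finj: "f i = f j \<longleftrightarrow> i = j" if "i < n" "j < n" for i j
    using gf that by (metis)
  have Mc: "M \<in> carrier_mat n n" by (simp add: M_def)
  define K where "K = char_poly_matrix M"
  have K: "K $$ (i,j) = (if i = j then [:0,1:] else 0) - [:complex_of_real (P (f i) (f j)):]"
    if "i < n" "j < n" for i j
    using that unfolding K_def char_poly_matrix_def M_def by simp
  define \<phi> where "\<phi> = (\<lambda>p::nat\<Rightarrow>nat. (\<lambda>x. if x \<in> S then f (p (g x)) else x))"
  define \<psi> where "\<psi> = (\<lambda>\<sigma>::'s\<Rightarrow>'s. (\<lambda>i. if i \<in> {0..<n} then g (\<sigma> (f i)) else i))"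
  have pbN: "permutes_bij_finite p {0..<n} S f g" if "p permutes {0..<n}" for p
    by (simp add: permutes_bij_finite_def permutes_bij_def permutes_bij_finite_axioms_def that bij gf)
  have pbS: "permutes_bij_finite \<sigma> S {0..<n} g f" if "\<sigma> permutes S" for \<sigma>
  proof -
    have "bij_betw g S {0..<n}" unfolding g_def using bij by (rule bij_betw_inv_into)
    then show ?thesis by (simp add: permutes_bij_finite_def permutes_bij_def permutes_bij_finite_axioms_def that fg finS)
  qed
  have "char_poly M = (\<Sum>p\<in>{p. p permutes {0..<n}}. signof p * (\<Prod>i=0..<n. K $$ (i, p i)))"
    unfolding char_poly_def K_def by (rule det_def') (simp add: Mc)
  also have "\<dots> = char_poly_on S P"
    unfolding char_poly_on_def
  proof (rule sum.reindex_bij_witness[of _ \<psi> \<phi>])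
    fix p assume "p \<in> {p. p permutes {0..<n}}"
    then have p: "p permutes {0..<n}" by simp
    show "\<psi> (\<phi> p) = p"
    proof
      fix i show "\<psi> (\<phi> p) i = p i"
      proof (cases "i < n")
        case True
        then have "p i < n" using p by (metis atLeastLessThan_iff permutes_in_image zero_le)
        then show ?thesis using True by (simp add: \<phi>_def \<psi>_def fS gf)
      next
        case False
        then show ?thesis using p by (simp add: \<psi>_def permutes_not_in)
      qed
    qed
    have "\<phi> p permutes S" unfolding \<phi>_def by (rule permutes_bij.permutes_p'[OF permutes_bij_finite.axioms(1)[OF pbN[OF p]]])
    then show "\<phi> p \<in> {\<sigma>. \<sigma> permutes S}" by simp
    have sg: "sign (\<phi> p) = sign p" unfolding \<phi>_def by (rule permutes_bij_finite.sign_p'[OF pbN[OF p]])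
    have "(\<Prod>x\<in>S. (if \<phi> p x = x then [:0, 1:] else 0) - [:complex_of_real (P x (\<phi> p x)):])
        = (\<Prod>i\<in>{0..<n}. (if \<phi> p (f i) = f i then [:0, 1:] else 0) - [:complex_of_real (P (f i) (\<phi> p (f i))):])"
      by (rule prod.reindex_bij_betw[OF bij, symmetric])
    also have "\<dots> = (\<Prod>i=0..<n. K $$ (i, p i))"
    proof (rule prod.cong[OF refl])
      fix i assume "i \<in> {0..<n}"
      then have i: "i < n" by simp
      then have pi: "p i < n" using p by (metis atLeastLessThan_iff permutes_in_image zero_le)
      have "\<phi> p (f i) = f (p i)" using i by (simp add: \<phi>_def fS gf)
      then show "(if \<phi> p (f i) = f i then [:0, 1:] else 0) - [:complex_of_real (P (f i) (\<phi> p (f i))):] = K $$ (i, p i)"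
      proof -
        have e: "(f (p i) = f i) = (i = p i)" using finj[OF pi i] by auto
        show ?thesis using \<open>\<phi> p (f i) = f (p i)\<close> by (simp only: K[OF i pi] e)
      qed
    qed
    finally show "of_int (sign (\<phi> p)) * (\<Prod>x\<in>S. (if \<phi> p x = x then [:0, 1:] else 0) - [:complex_of_real (P x (\<phi> p x)):])
        = signof p * (\<Prod>i = 0..<n. K $$ (i, p i))" using sg by simp
  next
    fix \<sigma> assume "\<sigma> \<in> {\<sigma>. \<sigma> permutes S}"
    then have s: "\<sigma> permutes S" by simp
    show "\<phi> (\<psi> \<sigma>) = \<sigma>"
    proof
      fix x show "\<phi> (\<psi> \<sigma>) x = \<sigma> x"
      proof (cases "x \<in> S")
        case True
        then have "\<sigma> x \<in> S" using s by (simp add: permutes_in_image)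
        then show ?thesis using True by (simp add: \<phi>_def \<psi>_def gS fg)
      next
        case False
        then show ?thesis using s by (simp add: \<phi>_def permutes_not_in)
      qed
    qed
    have "\<psi> \<sigma> permutes {0..<n}" unfolding \<psi>_def by (rule permutes_bij.permutes_p'[OF permutes_bij_finite.axioms(1)[OF pbS[OF s]]])
    then show "\<psi> \<sigma> \<in> {p. p permutes {0..<n}}" by simp
  qed
  finally show ?thesis unfolding M_def by simp
qed

definition mtr :: "complex mat \<Rightarrow> complex" where
  "mtr A = (\<Sum>i<dim_row A. A $$ (i,i))"

lemma mult_entry:
  assumes "A \<in> carrier_mat n n" "B \<in> carrier_mat n n" "i < n" "j < n"
  shows "(A * B) $$ (i,j) = (\<Sum>k<n. A $$ (i,k) * B $$ (k,j))"
  using assms by (simp add: scalar_prod_def atLeast0LessThan)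

lemma mtr_comm:
  assumes A: "A \<in> carrier_mat n n" and B: "B \<in> carrier_mat n n"
  shows "mtr (A * B) = mtr (B * A)"
proof -
  have "mtr (A * B) = (\<Sum>i<n. (A * B) $$ (i,i))" unfolding mtr_def using A by simp
  also have "\<dots> = (\<Sum>i<n. \<Sum>k<n. A $$ (i,k) * B $$ (k,i))"
    by (intro sum.cong[OF refl] mult_entry[OF A B]) auto
  also have "\<dots> = (\<Sum>k<n. \<Sum>i<n. B $$ (k,i) * A $$ (i,k))"
    by (subst sum.swap) (simp add: mult.commute)
  also have "\<dots> = (\<Sum>k<n. (B * A) $$ (k,k))"
    by (intro sum.cong[OF refl] mult_entry[OF B A, symmetric]) auto
  also have "\<dots> = mtr (B * A)" unfolding mtr_def using B by simp
  finally show ?thesis .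
qed

lemma mtr_similar:
  assumes "similar_mat_wit A B Pm Qm" "A \<in> carrier_mat n n"
  shows "mtr A = mtr B"
proof -
  from similar_mat_witD2[OF assms(2,1)] have
    PQ: "Pm * Qm = 1\<^sub>m n" and QP: "Qm * Pm = 1\<^sub>m n" and AB: "A = Pm * B * Qm"
    and Bc: "B \<in> carrier_mat n n" and Pc: "Pm \<in> carrier_mat n n" and Qc: "Qm \<in> carrier_mat n n" by auto
  have "mtr A = mtr (Pm * (B * Qm))" using AB Pc Bc Qc by (simp add: assoc_mult_mat)
  also have "\<dots> = mtr ((B * Qm) * Pm)" using Pc Bc Qc by (intro mtr_comm) auto
  also have "(B * Qm) * Pm = B" using Pc Bc Qc QP by (simp add: assoc_mult_mat)
  finally show ?thesis .
qed

lemma mtr_upper_sq: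
  assumes B: "B \<in> carrier_mat n n" and ut: "upper_triangular B"
  shows "mtr (B * B) = (\<Sum>i<n. (B $$ (i,i))^2)"
proof -
  have "mtr (B * B) = (\<Sum>i<n. (B * B) $$ (i,i))" unfolding mtr_def using B by simp
  also have "\<dots> = (\<Sum>i<n. \<Sum>k<n. B $$ (i,k) * B $$ (k,i))"
    by (intro sum.cong[OF refl] mult_entry[OF B B]) auto
  also have "\<dots> = (\<Sum>i<n. \<Sum>k<n. if k = i then (B $$ (i,i))^2 else 0)"
  proof (intro sum.cong[OF refl])
    fix i k assume i: "i \<in> {..<n}" and k: "k \<in> {..<n}"
    show "B $$ (i,k) * B $$ (k,i) = (if k = i then (B $$ (i,i))^2 else 0)"
    proof (cases "k < i")
      case True
      then have "B $$ (i,k) = 0" using ut i B unfolding upper_triangular_def by auto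
      then show ?thesis using True by simp
    next
      case False
      show ?thesis
      proof (cases "k = i")
        case True then show ?thesis by (simp add: power2_eq_square)
      next
        case ne: False
        with False have "i < k" by simp
        then have "B $$ (k,i) = 0" using ut k B unfolding upper_triangular_def by auto
        then show ?thesis using ne by simp
      qed
    qed
  qed
  also have "\<dots> = (\<Sum>i<n. (B $$ (i,i))^2)" by simp
  finally show ?thesis .
qed

locale sgf = sg +
  fixes f :: "nat \<Rightarrow> 'a \<times> 'a" and n :: nat
  assumes bij: "bij_betw f {0..<n} (arcs E)"
begin

definition "g = inv_into {0..<n} f"
definition "Mt = mat n n (\<lambda>(i,j). complex_of_real (arc_walk V E (f i) (f j)))"

lemma gf: "i < n \<Longrightarrow> g (f i) = i"
  using bij unfolding g_def by (simp add: bij_betw_def inv_into_f_f)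
lemma fg: "x \<in> arcs E \<Longrightarrow> f (g x) = x"
  using bij unfolding g_def by (metis bij_betw_imp_surj_on f_inv_into_f)
lemma gS: "x \<in> arcs E \<Longrightarrow> g x < n"
  using bij unfolding g_def by (metis atLeastLessThan_iff bij_betw_imp_surj_on inv_into_into)
lemma fS: "i < n \<Longrightarrow> f i \<in> arcs E"
  using bij by (simp add: bij_betw_apply)
lemma n_card: "n = card (arcs E)"
  using bij_betw_same_card[OF bij] by simp
lemma Mt_c: "Mt \<in> carrier_mat n n" by (simp add: Mt_def)
lemma Mt_idx: "i < n \<Longrightarrow> j < n \<Longrightarrow> Mt $$ (i,j) = complex_of_real (arc_walk V E (f i) (f j))"
  by (simp add: Mt_def)

lemma sum_re: "(\<Sum>j<n. G (f j)) = (\<Sum>b\<in>arcs E. G b)"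
  using sum.reindex_bij_betw[OF bij, of G] by (simp add: atLeast0LessThan)

lemma P_diag: "arc_walk V E a a = 0"
  using Eirr by (auto simp: arc_walk_def)

lemma npos: "n > 0"
proof -
  from ne obtain u v where "E u v" by (auto simp: edges_def)
  then have "(u,v) \<in> arcs E" by (simp add: arcs_def)
  then have "arcs E \<noteq> {}" by blast
  then show ?thesis using n_card finAr by (simp add: card_gt_0_iff)
qed

lemma col_to_F:
  fixes c :: "nat \<Rightarrow> complex"
  assumes "i < n"
  shows "(\<Sum>k<n. Mt $$ (i,k) * c k) = (\<Sum>b\<in>arcs E. complex_of_real (arc_walk V E (f i) b) * c (g b))"
proof -
  have "(\<Sum>k<n. Mt $$ (i,k) * c k) = (\<Sum>k<n. complex_of_real (arc_walk V E (f i) (f k)) * c (g (f k)))"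
    using assms by (intro sum.cong[OF refl]) (simp add: Mt_idx gf)
  also have "\<dots> = (\<Sum>b\<in>arcs E. complex_of_real (arc_walk V E (f i) b) * c (g b))"
    by (rule sum_re)
  finally show ?thesis .
qed

lemma eigvec_F:
  assumes ev: "eigenvector Mt v \<rho>"
  shows "\<forall>a\<in>arcs E. (\<Sum>b\<in>arcs E. complex_of_real (arc_walk V E a b) * vec_index v (g b)) = \<rho> * vec_index v (g a)"
    and "\<exists>a0\<in>arcs E. vec_index v (g a0) \<noteq> 0"
proof -
  from ev have v: "v \<in> carrier_vec n" and v0: "v \<noteq> 0\<^sub>v n" and Mv: "Mt *\<^sub>v v = \<rho> \<cdot>\<^sub>v v"
    unfolding eigenvector_def using Mt_c by auto
  show "\<forall>a\<in>arcs E. (\<Sum>b\<in>arcs E. complex_of_real (arc_walk V E a b) * vec_index v (g b)) = \<rho> * vec_index v (g a)"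
  proof
    fix a assume a: "a \<in> arcs E"
    let ?i = "g a"
    have i: "?i < n" using gS[OF a] .
    have "vec_index (Mt *\<^sub>v v) ?i = (\<Sum>k<n. Mt $$ (?i,k) * vec_index v k)"
      using i v Mt_c by (simp add: scalar_prod_def atLeast0LessThan)
    also have "\<dots> = (\<Sum>b\<in>arcs E. complex_of_real (arc_walk V E (f ?i) b) * vec_index v (g b))"
      by (rule col_to_F[OF i])
    finally have "(\<Sum>b\<in>arcs E. complex_of_real (arc_walk V E a b) * vec_index v (g b)) = vec_index (Mt *\<^sub>v v) ?i"
      using fg[OF a] by simp
    also have "\<dots> = \<rho> * vec_index v ?i" using Mv i v by simp
    finally show "(\<Sum>b\<in>arcs E. complex_of_real (arc_walk V E a b) * vec_index v (g b)) = \<rho> * vec_index v (g a)" .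
  qed
  show "\<exists>a0\<in>arcs E. vec_index v (g a0) \<noteq> 0"
  proof (rule ccontr)
    assume "\<not> ?thesis"
    then have "\<forall>i<n. vec_index v i = 0" using fS gf by metis
    then have "v = 0\<^sub>v n" using v by (intro eq_vecI) auto
    with v0 show False by simp
  qed
qed

lemma F_eigvec:
  fixes F :: "'a \<times> 'a \<Rightarrow> complex"
  assumes eig: "\<forall>a\<in>arcs E. (\<Sum>b\<in>arcs E. complex_of_real (arc_walk V E a b) * F b) = \<rho> * F a"
    and a0: "a0 \<in> arcs E" "F a0 \<noteq> 0"
  shows "poly (char_poly Mt) \<rho> = 0"
proof -
  define w where "w = vec n (\<lambda>i. F (f i))"
  have wc: "w \<in> carrier_vec n" by (simp add: w_def)
  have wg: "vec_index w (g b) = F b" if "b \<in> arcs E" for b using that by (simp add: w_def gS fg)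
  have "vec_index w (g a0) \<noteq> 0" using wg[OF a0(1)] a0(2) by simp
  then have w0: "w \<noteq> 0\<^sub>v n" using gS[OF a0(1)] by auto
  have "Mt *\<^sub>v w = \<rho> \<cdot>\<^sub>v w"
  proof (rule eq_vecI)
    fix i assume "i < dim_vec (\<rho> \<cdot>\<^sub>v w)"
    then have i: "i < n" by (simp add: w_def)
    have "vec_index (Mt *\<^sub>v w) i = (\<Sum>k<n. Mt $$ (i,k) * vec_index w k)"
      using i wc Mt_c by (simp add: scalar_prod_def atLeast0LessThan)
    also have "\<dots> = (\<Sum>b\<in>arcs E. complex_of_real (arc_walk V E (f i) b) * vec_index w (g b))"
      by (rule col_to_F[OF i])
    also have "\<dots> = (\<Sum>b\<in>arcs E. complex_of_real (arc_walk V E (f i) b) * F b)"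
      by (intro sum.cong[OF refl]) (simp add: wg)
    also have "\<dots> = \<rho> * F (f i)" using eig fS[OF i] by blast
    also have "\<dots> = vec_index (\<rho> \<cdot>\<^sub>v w) i" using i by (simp add: w_def)
    finally show "vec_index (Mt *\<^sub>v w) i = vec_index (\<rho> \<cdot>\<^sub>v w) i" .
  qed (use Mt_c in \<open>simp add: w_def\<close>)
  then have "eigenvector Mt w \<rho>" unfolding eigenvector_def using wc w0 Mt_c by simp
  then have "eigenvalue Mt \<rho>" unfolding eigenvalue_def by blast
  then show ?thesis using eigenvalue_root_char_poly[OF Mt_c] by simp
qed

lemma root_real:
  assumes r: "poly (char_poly Mt) \<rho> = 0"
  shows "Im \<rho> = 0 \<and> cmod \<rho> \<le> 1"
proof (cases "\<rho> = 0")
  case True then show ?thesis by simp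
next
  case False
  from r have "eigenvalue Mt \<rho>" using eigenvalue_root_char_poly[OF Mt_c] by simp
  then obtain v where ev: "eigenvector Mt v \<rho>" unfolding eigenvalue_def by blast
  from eigvec_F[OF ev] obtain a0 where "a0 \<in> arcs E" "vec_index v (g a0) \<noteq> 0" by blast
  with eig_real[OF eigvec_F(1)[OF ev] False] show ?thesis by blast
qed

lemma root_one: "poly (char_poly Mt) 1 = 0"
proof -
  from ne obtain u v where "E u v" by (auto simp: edges_def)
  then have a0: "(u,v) \<in> arcs E" by (simp add: arcs_def)
  have "\<forall>a\<in>arcs E. (\<Sum>b\<in>arcs E. complex_of_real (arc_walk V E a b) * 1) = 1 * 1"
    using row_sum by (simp flip: of_real_sum)
  from F_eigvec[OF this a0] show ?thesis by simp
qed

lemma root_mone: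
  assumes bp: "bipartite V E"
  shows "poly (char_poly Mt) (-1) = 0"
proof -
  from bp obtain A B where AV: "A \<union> B = V" and AB: "A \<inter> B = {}"
    and bip: "\<forall>u v. E u v \<longrightarrow> (u \<in> A \<and> v \<in> B) \<or> (u \<in> B \<and> v \<in> A)"
    unfolding bipartite_def by blast
  define F where "F = (\<lambda>a::'a\<times>'a. if fst a \<in> A then (1::complex) else -1)"
  from ne obtain u v where "E u v" by (auto simp: edges_def)
  then have a0: "(u,v) \<in> arcs E" by (simp add: arcs_def)
  have eig: "\<forall>a\<in>arcs E. (\<Sum>b\<in>arcs E. complex_of_real (arc_walk V E a b) * F b) = -1 * F a"
  proof
    fix a assume a: "a \<in> arcs E"
    then have Ea: "E (fst a) (snd a)" by (auto simp: arcs_def)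
    have sa: "snd a \<in> V" using a EV by (auto simp: arcs_def)
    have "(\<Sum>b\<in>arcs E. complex_of_real (arc_walk V E a b) * F b) = (\<Sum>y\<in>N (snd a). F (snd a, y)) / of_nat (degree V E (snd a))"
      by (rule P_mult_sum[OF a])
    also have "(\<Sum>y\<in>N (snd a). F (snd a, y)) = of_nat (card (N (snd a))) * (if snd a \<in> A then 1 else -1)"
      by (simp add: F_def)
    also have "\<dots> / of_nat (degree V E (snd a)) = (if snd a \<in> A then 1 else -1)"
      using deg_pos[OF sa] by (simp add: d_N)
    also have "\<dots> = -1 * F a" using bip Ea AB by (auto simp: F_def)
    finally show "(\<Sum>b\<in>arcs E. complex_of_real (arc_walk V E a b) * F b) = -1 * F a" .
  qed
  have "F (u,v) \<noteq> 0" by (simp add: F_def)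
  from F_eigvec[OF eig a0 this] show ?thesis .
qed

lemma trace_Mt: "mtr Mt = 0"
  unfolding mtr_def using Mt_c by (simp add: Mt_idx P_diag)

lemma trace_Mt2:
  "mtr (Mt * Mt) = complex_of_real (\<Sum>a\<in>arcs E. 1 / (real (degree V E (fst a)) * real (degree V E (snd a))))"
proof -
  have "mtr (Mt * Mt) = (\<Sum>i<n. (Mt * Mt) $$ (i,i))" unfolding mtr_def using Mt_c by simp
  also have "\<dots> = (\<Sum>i<n. \<Sum>k<n. Mt $$ (i,k) * Mt $$ (k,i))"
    by (intro sum.cong[OF refl] mult_entry[OF Mt_c Mt_c]) auto
  also have "\<dots> = (\<Sum>i<n. \<Sum>b\<in>arcs E. complex_of_real (arc_walk V E (f i) b) * complex_of_real (arc_walk V E b (f i)))"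
  proof (intro sum.cong[OF refl])
    fix i assume "i \<in> {..<n}"
    then have i: "i < n" by simp
    have "(\<Sum>k<n. Mt $$ (i,k) * Mt $$ (k,i)) = (\<Sum>k<n. Mt $$ (i,k) * complex_of_real (arc_walk V E (f k) (f i)))"
      using i by (intro sum.cong[OF refl]) (simp add: Mt_idx)
    also have "\<dots> = (\<Sum>b\<in>arcs E. complex_of_real (arc_walk V E (f i) b) * complex_of_real (arc_walk V E (f (g b)) (f i)))"
      by (rule col_to_F[OF i])
    also have "\<dots> = (\<Sum>b\<in>arcs E. complex_of_real (arc_walk V E (f i) b) * complex_of_real (arc_walk V E b (f i)))"
      by (intro sum.cong[OF refl]) (simp add: fg)
    finally show "(\<Sum>k<n. Mt $$ (i,k) * Mt $$ (k,i)) = (\<Sum>b\<in>arcs E. complex_of_real (arc_walk V E (f i) b) * complex_of_real (arc_walk V E b (f i)))" .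
  qed
  also have "\<dots> = (\<Sum>a\<in>arcs E. \<Sum>b\<in>arcs E. complex_of_real (arc_walk V E a b) * complex_of_real (arc_walk V E b a))"
    by (rule sum_re)
  also have "\<dots> = (\<Sum>a\<in>arcs E. complex_of_real (1 / (real (degree V E (fst a)) * real (degree V E (snd a)))))"
  proof (intro sum.cong[OF refl])
    fix a assume a: "a \<in> arcs E"
    then have Ea: "E (fst a) (snd a)" by (auto simp: arcs_def)
    have uN: "fst a \<in> N (snd a)" using Ea EV Esym by (auto simp: N_def)
    have "(\<Sum>b\<in>arcs E. complex_of_real (arc_walk V E a b) * complex_of_real (arc_walk V E b a))
        = (\<Sum>y\<in>N (snd a). complex_of_real (arc_walk V E (snd a, y) a)) / of_nat (degree V E (snd a))"
      by (rule P_mult_sum[OF a])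
    also have "(\<Sum>y\<in>N (snd a). complex_of_real (arc_walk V E (snd a, y) a))
        = (\<Sum>y\<in>N (snd a). if y = fst a then complex_of_real (1 / real (degree V E (fst a))) else 0)"
      using a by (intro sum.cong[OF refl]) (simp add: P_eq)
    also have "\<dots> = complex_of_real (1 / real (degree V E (fst a)))"
      using uN finN by simp
    finally show "(\<Sum>b\<in>arcs E. complex_of_real (arc_walk V E a b) * complex_of_real (arc_walk V E b a))
        = complex_of_real (1 / (real (degree V E (fst a)) * real (degree V E (snd a))))"
      by (simp add: of_real_divide of_real_mult)
  qed
  also have "\<dots> = complex_of_real (\<Sum>a\<in>arcs E. 1 / (real (degree V E (fst a)) * real (degree V E (snd a))))"
    by (rule of_real_sum[symmetric])
  finally show ?thesis .
qed

end

lemma prod_lin_perm: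
  fixes xs ys :: "complex list"
  assumes "mset xs = mset ys"
  shows "(\<Prod>a\<leftarrow>xs. [:-a,1:]) = (\<Prod>a\<leftarrow>ys. [:-a,1:])"
  by (metis assms mset_map prod_mset_prod_list)

lemma poly_lin_prod:
  fixes as :: "complex list"
  shows "poly (\<Prod>a\<leftarrow>as. [:-a,1:]) x = 0 \<longleftrightarrow> x \<in> set as"
  by (induction as) auto

lemma proots_lin_prod:
  fixes as :: "complex list"
  shows "proots (\<Prod>a\<leftarrow>as. [:-a,1:]) = mset as"
proof (induction as)
  case Nil then show ?case by simp
next
  case (Cons a as)
  have nz: "(\<Prod>a\<leftarrow>as. [:-a,1:]) \<noteq> 0"
  proof
    assume "(\<Prod>a\<leftarrow>as. [:-a,1:]) = 0"
    then have "0 \<in> set (map (\<lambda>a. [:-a,1:]) as)" by (simp only: prod_list_zero_iff)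
    then obtain x :: complex where "0 = [:-x,1:]" by auto
    then have "coeff (0::complex poly) 1 = coeff [:-x,1:] 1" by (rule arg_cong)
    then show False by simp
  qed
  have "proots (\<Prod>a\<leftarrow>a # as. [:-a,1:]) = proots ([:-a,1:] * (\<Prod>a\<leftarrow>as. [:-a,1:]))" by simp
  also have "\<dots> = proots [:-a,1:] + proots (\<Prod>a\<leftarrow>as. [:-a,1:])"
    by (rule proots_mult) (use nz in auto)
  also have "\<dots> = mset (a # as)" using Cons.IH by simp
  finally show ?case .
qed

lemma cnt_map_of_real: "count (mset (map complex_of_real rs)) (complex_of_real x) = count (mset rs) x"
  by (induction rs) auto

lemma sum_list_of_real: "sum_list (map complex_of_real rs) = complex_of_real (sum_list rs)"
  by (induction rs) auto

lemma sum_list_idx: "sum_list (map h xs) = (\<Sum>i<length xs. h (xs ! i))"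
  by (simp add: sum_list_sum_nth atLeast0LessThan)

lemma sum_list_ind: "sum_list (map (\<lambda>x. if x = a then 1 else (0::real)) xs) = real (count (mset xs) a)"
  by (induction xs) auto

context sgf
begin

lemma schur_facts:
  assumes cp: "char_poly Mt = (\<Prod>a\<leftarrow>es. [:-a,1:])"
  obtains B Pm Qm where "similar_mat_wit Mt B Pm Qm" "upper_triangular B" "B \<in> carrier_mat n n"
    "\<And>i. i < n \<Longrightarrow> B $$ (i,i) = es ! i" "length es = n"
proof -
  obtain B Pm Qm where sd: "schur_decomposition Mt es = (B, Pm, Qm)" by (cases "schur_decomposition Mt es") auto
  from schur_decomposition[OF Mt_c cp sd] have
    w: "similar_mat_wit Mt B Pm Qm" and ut: "upper_triangular B" and dg: "diag_mat B = es" by auto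
  from similar_mat_witD2[OF Mt_c w] have Bc: "B \<in> carrier_mat n n" by auto
  have len: "length es = n" using dg Bc by (auto simp: diag_mat_def)
  have "B $$ (i,i) = es ! i" if "i < n" for i using dg Bc that by (auto simp: diag_mat_def)
  then show ?thesis using that w ut Bc len by blast
qed

lemma pow2_mat: "A \<in> carrier_mat m m \<Longrightarrow> A ^\<^sub>m 2 = A * A"
  by (simp add: numeral_2_eq_2)

lemma trace_facts:
  assumes cp: "char_poly Mt = (\<Prod>a\<leftarrow>es. [:-a,1:])"
  shows "sum_list es = 0"
    and "sum_list (map (\<lambda>x. x^2) es) = complex_of_real (\<Sum>a\<in>arcs E. 1 / (real (degree V E (fst a)) * real (degree V E (snd a))))"
proof -
  obtain B Pm Qm where w: "similar_mat_wit Mt B Pm Qm" and ut: "upper_triangular B" and Bc: "B \<in> carrier_mat n n"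
    and dg: "\<And>i. i < n \<Longrightarrow> B $$ (i,i) = es ! i" and len: "length es = n"
    using schur_facts[OF cp] by blast
  have "0 = mtr Mt" using trace_Mt by simp
  also have "\<dots> = mtr B" by (rule mtr_similar[OF w Mt_c])
  also have "\<dots> = (\<Sum>i<n. es ! i)" unfolding mtr_def using Bc dg by simp
  also have "\<dots> = sum_list es" using len by (simp add: sum_list_sum_nth atLeast0LessThan)
  finally show "sum_list es = 0" by simp
  have w2: "similar_mat_wit (Mt ^\<^sub>m 2) (B ^\<^sub>m 2) Pm Qm" by (rule similar_mat_wit_pow[OF w])
  then have w2': "similar_mat_wit (Mt * Mt) (B * B) Pm Qm" using Mt_c Bc by (simp add: pow2_mat)
  have "mtr (Mt * Mt) = mtr (B * B)" by (rule mtr_similar[OF w2', of n]) (use Mt_c in simp)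
  also have "\<dots> = (\<Sum>i<n. (B $$ (i,i))^2)" by (rule mtr_upper_sq[OF Bc ut])
  also have "\<dots> = sum_list (map (\<lambda>x. x^2) es)" using len dg by (simp add: sum_list_idx)
  finally show "sum_list (map (\<lambda>x. x^2) es) = complex_of_real (\<Sum>a\<in>arcs E. 1 / (real (degree V E (fst a)) * real (degree V E (snd a))))"
    using trace_Mt2 by simp
qed

lemma count_one:
  assumes cp: "char_poly Mt = (\<Prod>a\<leftarrow>as. [:-a,1:])"
  shows "count (mset as) 1 \<le> 1"
proof (rule ccontr)
  assume "\<not> ?thesis"
  then have c2: "count (mset as) 1 \<ge> 2" by simp
  define es where "es = 1 # 1 # remove1 1 (remove1 1 as)"
  have cpos: "count (mset as) 1 \<noteq> 0" using c2 by linarith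
  have in1: "1 \<in># mset as"
  proof (rule ccontr)
    assume "1 \<notin># mset as"
    then have "count (mset as) 1 = 0" by (rule not_in_iff[THEN iffD1])
    with cpos show False by contradiction
  qed
  have in2: "1 \<in># mset as - {#1#}" using c2 not_in_iff[of 1 "mset as - {#1#}"] by auto
  have e1: "add_mset 1 (mset as - {#1#} - {#1#}) = mset as - {#1#}" using in2 by (rule insert_DiffM)
  have e2: "add_mset 1 (mset as - {#1#}) = mset as" using in1 by (rule insert_DiffM)
  have "mset es = mset as" by (simp only: es_def mset.simps mset_remove1 e1 e2)
  then have cp': "char_poly Mt = (\<Prod>a\<leftarrow>es. [:-a,1:])" using cp prod_lin_perm by metis
  obtain B Pm Qm where w: "similar_mat_wit Mt B Pm Qm" and ut: "upper_triangular B" and Bc: "B \<in> carrier_mat n n"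
    and dg: "\<And>i. i < n \<Longrightarrow> B $$ (i,i) = es ! i" and len: "length es = n"
    using schur_facts[OF cp'] by blast
  have n2: "n \<ge> 2" using len by (simp add: es_def)
  have B00: "B $$ (0,0) = 1" using dg[of 0] n2 by (simp add: es_def)
  have B11: "B $$ (1,1) = 1" using dg[of 1] n2 by (simp add: es_def)
  have Blow: "B $$ (k,j) = 0" if "k < n" "j < k" for k j using ut that Bc unfolding upper_triangular_def by auto
  from similar_mat_witD2[OF Mt_c w] have PQ: "Pm * Qm = 1\<^sub>m n" and QP: "Qm * Pm = 1\<^sub>m n"
    and MB: "Mt = Pm * B * Qm" and Pc: "Pm \<in> carrier_mat n n" and Qc: "Qm \<in> carrier_mat n n" by auto
  have MP: "Mt * Pm = Pm * B"
  proof -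
    have PB: "Pm * B \<in> carrier_mat n n" using Pc Bc by simp
    have "Mt * Pm = ((Pm * B) * Qm) * Pm" using MB by simp
    also have "\<dots> = (Pm * B) * (Qm * Pm)" by (rule assoc_mult_mat[OF PB Qc Pc])
    finally have "Mt * Pm = (Pm * B) * (Qm * Pm)" .
    also have "\<dots> = Pm * B" using QP Pc Bc by simp
    finally show ?thesis .
  qed
  have ent: "(\<Sum>k<n. Mt $$ (i,k) * Pm $$ (k,j)) = (\<Sum>k<n. Pm $$ (i,k) * B $$ (k,j))" if "i < n" "j < n" for i j
  proof -
    have "(\<Sum>k<n. Mt $$ (i,k) * Pm $$ (k,j)) = (Mt * Pm) $$ (i,j)" using mult_entry[OF Mt_c Pc that] by simp
    also have "\<dots> = (Pm * B) $$ (i,j)" using MP by simp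
    also have "\<dots> = (\<Sum>k<n. Pm $$ (i,k) * B $$ (k,j))" using mult_entry[OF Pc Bc that] by simp
    finally show ?thesis .
  qed
  define \<beta> where "\<beta> = B $$ (0,1)"
  have col0: "(\<Sum>k<n. Pm $$ (i,k) * B $$ (k,0)) = Pm $$ (i,0)" if "i < n" for i
  proof -
    have "(\<Sum>k<n. Pm $$ (i,k) * B $$ (k,0)) = (\<Sum>k<n. if k = 0 then Pm $$ (i,0) else 0)"
      by (intro sum.cong[OF refl]) (auto simp: B00 Blow)
    also have "\<dots> = Pm $$ (i,0)" using n2 by simp
    finally show ?thesis .
  qed
  have col1: "(\<Sum>k<n. Pm $$ (i,k) * B $$ (k,1)) = Pm $$ (i,1) + \<beta> * Pm $$ (i,0)" if "i < n" for i
  proof -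
    have "(\<Sum>k<n. Pm $$ (i,k) * B $$ (k,1)) = (\<Sum>k<n. (if k = 1 then Pm $$ (i,1) else 0) + (if k = 0 then \<beta> * Pm $$ (i,0) else 0))"
    proof (intro sum.cong[OF refl])
      fix k assume "k \<in> {..<n}"
      then have k: "k < n" by simp
      consider "k = 0" | "k = 1" | "k > 1" by linarith
      then show "Pm $$ (i,k) * B $$ (k,1) = (if k = 1 then Pm $$ (i,1) else 0) + (if k = 0 then \<beta> * Pm $$ (i,0) else 0)"
      proof cases
        case 1 then show ?thesis by (simp add: \<beta>_def)
      next
        case 2 then show ?thesis using B11 by simp
      next
        case 3 then show ?thesis using Blow[OF k, of 1] by simp
      qed
    qed
    also have "\<dots> = Pm $$ (i,1) + \<beta> * Pm $$ (i,0)" using n2 by (simp add: sum.distrib)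
    finally show ?thesis .
  qed
  define F1 where "F1 = (\<lambda>a. Pm $$ (g a, 0))"
  define F2 where "F2 = (\<lambda>a. Pm $$ (g a, 1))"
  have colF: "(\<Sum>b\<in>arcs E. complex_of_real (arc_walk V E a b) * Pm $$ (g b, j)) = (\<Sum>k<n. Pm $$ (g a,k) * B $$ (k,j))"
    if a: "a \<in> arcs E" and j: "j < n" for a j
  proof -
    have "(\<Sum>b\<in>arcs E. complex_of_real (arc_walk V E a b) * Pm $$ (g b, j)) = (\<Sum>k<n. Mt $$ (g a,k) * Pm $$ (k,j))"
      using col_to_F[OF gS[OF a], of "\<lambda>k. Pm $$ (k,j)"] fg[OF a] by simp
    also have "\<dots> = (\<Sum>k<n. Pm $$ (g a,k) * B $$ (k,j))" by (rule ent[OF gS[OF a] j])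
    finally show ?thesis .
  qed
  have eq1: "\<forall>a\<in>arcs E. (\<Sum>b\<in>arcs E. complex_of_real (arc_walk V E a b) * F1 b) = F1 a"
    unfolding F1_def using colF col0 gS n2 by simp
  have eq2: "\<forall>a\<in>arcs E. (\<Sum>b\<in>arcs E. complex_of_real (arc_walk V E a b) * F2 b) = F2 a + \<beta> * F1 a"
    unfolding F1_def F2_def using colF col1 gS n2 by simp
  have f0: "f 0 \<in> arcs E" using fS npos by simp
  define c where "c = F1 (f 0)"
  have P0: "Pm $$ (k,0) = c" if "k < n" for k
    using harmonic_arcs[OF eq1] fS[OF that] f0 gf[OF that] unfolding c_def F1_def by metis
  have sQ: "(Qm * Pm) $$ (i,j) = (\<Sum>k<n. Qm $$ (i,k) * Pm $$ (k,j))" if "i < n" "j < n" for i j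
    by (rule mult_entry[OF Qc Pc that])
  have "1 = (Qm * Pm) $$ (0,0)" using QP npos by simp
  also have "\<dots> = c * (\<Sum>k<n. Qm $$ (0,k))" using sQ[of 0 0] npos P0 by (simp add: sum_distrib_left mult.commute)
  finally have cs: "c * (\<Sum>k<n. Qm $$ (0,k)) = 1" by simp
  then have c0: "c \<noteq> 0" by auto
  have "(\<Sum>a\<in>arcs E. \<Sum>b\<in>arcs E. complex_of_real (arc_walk V E a b) * F2 b) = (\<Sum>b\<in>arcs E. F2 b)"
    by (rule col_sum_gen)
  moreover have "(\<Sum>a\<in>arcs E. \<Sum>b\<in>arcs E. complex_of_real (arc_walk V E a b) * F2 b) = (\<Sum>a\<in>arcs E. F2 a + \<beta> * c)"
  proof (intro sum.cong[OF refl])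
    fix a assume a: "a \<in> arcs E"
    have "F1 a = c" unfolding F1_def using P0 gS[OF a] by simp
    then show "(\<Sum>b\<in>arcs E. complex_of_real (arc_walk V E a b) * F2 b) = F2 a + \<beta> * c" using eq2 a by simp
  qed
  ultimately have "of_nat (card (arcs E)) * (\<beta> * c) = 0" by (simp add: sum.distrib)
  then have "\<beta> * c = 0" using npos n_card by simp
  then have b0: "\<beta> = 0" using c0 by simp
  have eq2': "\<forall>a\<in>arcs E. (\<Sum>b\<in>arcs E. complex_of_real (arc_walk V E a b) * F2 b) = F2 a"
    using eq2 b0 by simp
  define c2 where "c2 = F2 (f 0)"
  have P1: "Pm $$ (k,1) = c2" if "k < n" for k
    using harmonic_arcs[OF eq2'] fS[OF that] f0 gf[OF that] unfolding c2_def F2_def by metis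
  have "0 = (Qm * Pm) $$ (0,1)" using QP n2 by simp
  also have "\<dots> = c2 * (\<Sum>k<n. Qm $$ (0,k))" using sQ[of 0 1] n2 P1 by (simp add: sum_distrib_left mult.commute)
  finally have "c2 * (\<Sum>k<n. Qm $$ (0,k)) = 0" by simp
  moreover have "(\<Sum>k<n. Qm $$ (0,k)) \<noteq> 0" using cs by auto
  ultimately have c20: "c2 = 0" by simp
  have "1 = (Qm * Pm) $$ (1,1)" using QP n2 by simp
  also have "\<dots> = c2 * (\<Sum>k<n. Qm $$ (1,k))" using sQ[of 1 1] n2 P1 by (simp add: sum_distrib_left mult.commute)
  also have "\<dots> = 0" using c20 by simp
  finally show False by simp
qed

end

lemma pt_phi:
  fixes r :: real
  assumes "-1 \<le> r" "r \<le> 1"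
  defines "\<phi> \<equiv> 1/(1-r) - (1 + r) + 2 * (if r = 1 then 1 else 0) - (if r = -1 then 1 else 0) / 2"
  shows "\<phi> \<ge> 0" and "\<phi> = 0 \<longleftrightarrow> r = 0 \<or> r = 1 \<or> r = -1"
proof -
  consider "r = 1" | "r = -1" | "-1 < r \<and> r < 1" using assms by linarith
  then have "\<phi> \<ge> 0 \<and> (\<phi> = 0 \<longleftrightarrow> r = 0 \<or> r = 1 \<or> r = -1)"
  proof cases
    case 1 then show ?thesis by (simp add: \<phi>_def)
  next
    case 2 then show ?thesis by (simp add: \<phi>_def)
  next
    case 3
    then have ne: "r \<noteq> 1" "r \<noteq> -1" by auto
    have "\<phi> = r^2 / (1 - r)" using 3 ne unfolding \<phi>_def by (simp add: field_simps power2_eq_square)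
    moreover have "1 - r > 0" using 3 by simp
    ultimately show ?thesis using ne by simp
  qed
  then show "\<phi> \<ge> 0" and "\<phi> = 0 \<longleftrightarrow> r = 0 \<or> r = 1 \<or> r = -1" by auto
qed

lemma pt_psi:
  fixes r :: real
  assumes "-1 \<le> r" "r \<le> 1"
  defines "\<psi> \<equiv> r^2 - (if r = 1 then 1 else 0) - (if r = -1 then 1 else 0)"
  shows "\<psi> \<ge> 0" and "\<psi> = 0 \<longleftrightarrow> r = 0 \<or> r = 1 \<or> r = -1"
proof -
  consider "r = 1" | "r = -1" | "r \<noteq> 1 \<and> r \<noteq> -1" by blast
  then have "\<psi> \<ge> 0 \<and> (\<psi> = 0 \<longleftrightarrow> r = 0 \<or> r = 1 \<or> r = -1)"
  proof cases
    case 1 then show ?thesis by (simp add: \<psi>_def)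
  next
    case 2 then show ?thesis by (simp add: \<psi>_def)
  next
    case 3 then show ?thesis by (simp add: \<psi>_def)
  qed
  then show "\<psi> \<ge> 0" and "\<psi> = 0 \<longleftrightarrow> r = 0 \<or> r = 1 \<or> r = -1" by auto
qed

lemma final_real:
  fixes rs :: "real list"
  assumes bnd: "\<forall>r\<in>set rs. -1 \<le> r \<and> r \<le> 1" and c1: "count (mset rs) 1 = 1"
    and m1: "-1 \<in> set rs" and s0: "sum_list rs = 0"
  shows "sum_list (map (\<lambda>r. 1/(1-r)) rs) \<ge> real (length rs) - 3/2"
    and "sum_list (map (\<lambda>r. 1/(1-r)) rs) = real (length rs) - 3/2 \<longleftrightarrow> sum_list (map (\<lambda>r. r^2) rs) = 2"
proof -
  define L where "L = length rs"
  define x where "x = (\<lambda>i. rs ! i)"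
  have xb: "-1 \<le> x i \<and> x i \<le> 1" if "i < L" for i using bnd that unfolding x_def L_def by auto
  define ind1 where "ind1 = (\<lambda>r::real. if r = 1 then 1 else (0::real))"
  define indm where "indm = (\<lambda>r::real. if r = -1 then 1 else (0::real))"
  define \<phi> where "\<phi> = (\<lambda>r::real. 1/(1-r) - (1 + r) + 2 * ind1 r - indm r / 2)"
  define \<psi> where "\<psi> = (\<lambda>r::real. r^2 - ind1 r - indm r)"
  have phin: "\<phi> (x i) \<ge> 0" if "i < L" for i using pt_phi(1)[of "x i"] xb[OF that] unfolding \<phi>_def ind1_def indm_def by simp
  have phi0: "\<phi> (x i) = 0 \<longleftrightarrow> x i = 0 \<or> x i = 1 \<or> x i = -1" if "i < L" for i
    using pt_phi(2)[of "x i"] xb[OF that] unfolding \<phi>_def ind1_def indm_def by simp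
  have psin: "\<psi> (x i) \<ge> 0" if "i < L" for i using pt_psi(1)[of "x i"] xb[OF that] unfolding \<psi>_def ind1_def indm_def by simp
  have psi0: "\<psi> (x i) = 0 \<longleftrightarrow> x i = 0 \<or> x i = 1 \<or> x i = -1" if "i < L" for i
    using pt_psi(2)[of "x i"] xb[OF that] unfolding \<psi>_def ind1_def indm_def by simp
  define cm where "cm = real (count (mset rs) (-1))"
  have cm1: "cm \<ge> 1" unfolding cm_def using m1 by (simp add: Suc_le_eq)
  have S1: "(\<Sum>i<L. ind1 (x i)) = 1"
    using sum_list_ind[of 1 rs] c1 unfolding L_def x_def ind1_def by (simp add: sum_list_idx)
  have Sm: "(\<Sum>i<L. indm (x i)) = cm"
    using sum_list_ind[of "-1" rs] unfolding L_def x_def indm_def cm_def by (simp add: sum_list_idx)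
  have Sx: "(\<Sum>i<L. x i) = 0" using s0 unfolding L_def x_def by (simp add: sum_list_sum_nth atLeast0LessThan)
  have K: "sum_list (map (\<lambda>r. 1/(1-r)) rs) = (\<Sum>i<L. \<phi> (x i)) + L - 2 + cm / 2"
  proof -
    have "sum_list (map (\<lambda>r. 1/(1-r)) rs) = (\<Sum>i<L. \<phi> (x i) + 1 + x i - 2 * ind1 (x i) + indm (x i) / 2)"
      unfolding sum_list_idx L_def x_def \<phi>_def by simp
    also have "\<dots> = (\<Sum>i<L. \<phi> (x i)) + L + (\<Sum>i<L. x i) - 2 * (\<Sum>i<L. ind1 (x i)) + (\<Sum>i<L. indm (x i)) / 2"
      by (simp add: sum.distrib sum_subtractf sum_distrib_left sum_divide_distrib)
    finally show ?thesis using S1 Sm Sx by simp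
  qed
  have Q: "sum_list (map (\<lambda>r. r^2) rs) = (\<Sum>i<L. \<psi> (x i)) + 1 + cm"
  proof -
    have "sum_list (map (\<lambda>r. r^2) rs) = (\<Sum>i<L. \<psi> (x i) + ind1 (x i) + indm (x i))"
      unfolding sum_list_idx L_def x_def \<psi>_def by simp
    also have "\<dots> = (\<Sum>i<L. \<psi> (x i)) + (\<Sum>i<L. ind1 (x i)) + (\<Sum>i<L. indm (x i))"
      by (simp add: sum.distrib)
    finally show ?thesis using S1 Sm by simp
  qed
  have Pn: "(\<Sum>i<L. \<phi> (x i)) \<ge> 0" using phin by (intro sum_nonneg) auto
  have Qn: "(\<Sum>i<L. \<psi> (x i)) \<ge> 0" using psin by (intro sum_nonneg) auto
  show "sum_list (map (\<lambda>r. 1/(1-r)) rs) \<ge> real (length rs) - 3/2"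
    using K Pn cm1 unfolding L_def by simp
  have P0: "(\<Sum>i<L. \<phi> (x i)) = 0 \<longleftrightarrow> (\<forall>i\<in>{..<L}. \<phi> (x i) = 0)"
    by (rule sum_nonneg_eq_0_iff) (use phin in auto)
  have Q0: "(\<Sum>i<L. \<psi> (x i)) = 0 \<longleftrightarrow> (\<forall>i\<in>{..<L}. \<psi> (x i) = 0)"
    by (rule sum_nonneg_eq_0_iff) (use psin in auto)
  have PQ: "(\<forall>i\<in>{..<L}. \<phi> (x i) = 0) \<longleftrightarrow> (\<forall>i\<in>{..<L}. \<psi> (x i) = 0)" using phi0 psi0 by simp
  have "sum_list (map (\<lambda>r. 1/(1-r)) rs) = real (length rs) - 3/2 \<longleftrightarrow> (\<Sum>i<L. \<phi> (x i)) = 0 \<and> cm = 1"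
    using K Pn cm1 unfolding L_def by auto
  also have "\<dots> \<longleftrightarrow> (\<Sum>i<L. \<psi> (x i)) = 0 \<and> cm = 1" using P0 Q0 PQ by simp
  also have "\<dots> \<longleftrightarrow> sum_list (map (\<lambda>r. r^2) rs) = 2" using Q Qn cm1 by auto
  finally show "sum_list (map (\<lambda>r. 1/(1-r)) rs) = real (length rs) - 3/2 \<longleftrightarrow> sum_list (map (\<lambda>r. r^2) rs) = 2" .
qed

context sgf
begin

theorem main_sgf:
  assumes bp: "bipartite V E"
  shows "kemeny_edge V E \<ge> 2 * real (card (edges E)) - 3 / 2
    \<and> (kemeny_edge V E = 2 * real (card (edges E)) - 3 / 2 \<longleftrightarrow> complete_bipartite V E)"
proof -
  obtain as where cp: "char_poly Mt = (\<Prod>a\<leftarrow>as. [:-a,1:])" and len: "length as = n"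
    using char_poly_factorized[OF Mt_c] by blast
  have root: "\<rho> \<in> set as \<longleftrightarrow> poly (char_poly Mt) \<rho> = 0" for \<rho> using poly_lin_prod cp by simp
  have R: "Im \<rho> = 0 \<and> cmod \<rho> \<le> 1" if "\<rho> \<in> set as" for \<rho> using root_real[of \<rho>] root[of \<rho>] that by simp
  have one: "1 \<in> set as" using root_one root[of 1] by simp
  have mone: "-1 \<in> set as" using root_mone[OF bp] root[of "-1"] by simp
  have "count (mset as) 1 \<noteq> 0" using one by simp
  then have c1: "count (mset as) 1 = 1" using count_one[OF cp] by linarith
  note tr = trace_facts[OF cp]
  define rs where "rs = map Re as"
  have "map (\<lambda>a. complex_of_real (Re a)) as = as"
    by (rule map_idI) (use R in \<open>simp add: complex_eq_iff\<close>)
  then have as_rs: "as = map complex_of_real rs" unfolding rs_def by (simp add: o_def)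
  have ev: "eigenvalues_on (arcs E) (arc_walk V E) = mset as"
    unfolding eigenvalues_on_def char_poly_on_mat[OF bij] Mt_def[symmetric] cp by (rule proots_lin_prod)
  define h where "h = (\<lambda>\<rho>::complex. 1 / (1 - \<rho>))"
  have h1: "h 1 = 0" by (simp add: h_def)
  have in1: "1 \<in># mset as" using one by simp
  have "(\<Sum>\<rho>\<in>#mset as. h \<rho>) = h 1 + (\<Sum>\<rho>\<in>#mset as - {#1#}. h \<rho>)"
  proof -
    have "(\<Sum>\<rho>\<in>#mset as. h \<rho>) = (\<Sum>\<rho>\<in>#add_mset 1 (mset as - {#1#}). h \<rho>)" using insert_DiffM[OF in1] by simp
    also have "\<dots> = h 1 + (\<Sum>\<rho>\<in>#mset as - {#1#}. h \<rho>)" by simp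
    finally show ?thesis .
  qed
  then have "(\<Sum>\<rho>\<in>#mset as - {#1#}. h \<rho>) = sum_list (map h as)"
    using h1 by (simp add: sum_mset_sum_list flip: mset_map)
  also have "\<dots> = sum_list (map (\<lambda>r. complex_of_real (1/(1-r))) rs)"
    unfolding as_rs by (simp add: h_def o_def of_real_divide)
  also have "\<dots> = complex_of_real (sum_list (map (\<lambda>r. 1/(1-r)) rs))"
    using sum_list_of_real[of "map (\<lambda>r. 1/(1-r)) rs"] by (simp add: o_def)
  finally have Kc: "(\<Sum>\<rho>\<in>#mset as - {#1#}. 1 / (1 - \<rho>)) = complex_of_real (sum_list (map (\<lambda>r. 1/(1-r)) rs))"
    unfolding h_def .
  have K: "kemeny_edge V E = sum_list (map (\<lambda>r. 1/(1-r)) rs)"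
    unfolding kemeny_edge_def kemeny_def ev Kc by simp
  have bnd: "\<forall>r\<in>set rs. -1 \<le> r \<and> r \<le> 1"
  proof
    fix r assume "r \<in> set rs"
    then have "complex_of_real r \<in> set as" unfolding as_rs by simp
    then have "cmod (complex_of_real r) \<le> 1" using R by blast
    then show "-1 \<le> r \<and> r \<le> 1" by (simp add: abs_le_iff)
  qed
  have c1r: "count (mset rs) 1 = 1" using c1 cnt_map_of_real[of rs 1] unfolding as_rs by simp
  have m1r: "-1 \<in> set rs"
  proof -
    from mone obtain r where "r \<in> set rs" "complex_of_real r = -1" unfolding as_rs by auto
    then show ?thesis by (simp add: complex_eq_iff)
  qed
  have s0r: "sum_list rs = 0" using tr(1) sum_list_of_real[of rs] unfolding as_rs by simp
  define T where "T = (\<Sum>a\<in>arcs E. 1 / (real (degree V E (fst a)) * real (degree V E (snd a))))"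
  have "complex_of_real (sum_list (map (\<lambda>r. r^2) rs)) = sum_list (map (\<lambda>x. x^2) as)"
    unfolding as_rs using sum_list_of_real[of "map (\<lambda>r. r^2) rs"] by (simp add: o_def)
  also have "\<dots> = complex_of_real T" using tr(2) unfolding T_def .
  finally have sq: "sum_list (map (\<lambda>r. r^2) rs) = T" by (simp only: of_real_eq_iff)
  have lenr: "real (length rs) = 2 * real (card (edges E))"
    using len T_iff(3)[OF bp] n_card unfolding rs_def by simp
  note fr = final_real[OF bnd c1r m1r s0r]
  show ?thesis
    using fr T_iff(2)[OF bp] unfolding K lenr sq T_def by simp
qed

end

theorem lemma4p3:
  fixes V :: "'a set" and E :: "'a \<Rightarrow> 'a \<Rightarrow> bool"
  assumes "simple_graph V E" and "connected_graph V E" and "bipartite V E"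
    and "edges E \<noteq> {}"
  shows "kemeny_edge V E \<ge> 2 * real (card (edges E)) - 3 / 2
    \<and> (kemeny_edge V E = 2 * real (card (edges E)) - 3 / 2 \<longleftrightarrow> complete_bipartite V E)"
proof -
  have sgV: "sg V E" using assms(1,2,4) by (simp add: sg_def)
  then have "finite (arcs E)" by (rule sg.finAr)
  then obtain f where bij: "bij_betw f {0..<card (arcs E)} (arcs E)" using ex_bij_betw_nat_finite by blast
  have "sgf V E f (card (arcs E))" using sgV bij by (simp add: sgf_def sgf_axioms_def)
  then show ?thesis using sgf.main_sgf assms(3) by blast
qed

end
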